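(* Let $d=d(n)$ satisfy $12 \le d \le e^{\sqrt[3]{\log n}}$ and let $m = m(n,d) = \frac{\log n \,\log\log\log n}{\log d\, \log\log n}$. If $p=p(n) \ge 16520\, \frac{m\log(e\cdot 4130\, m)}{n}$, then for all sufficiently large $n$, the probability that $G(n,p)$ fails to satisfy property P2 is less than $e^{-2np}$, where P2 is the property: for every pair of disjoint vertex sets $A,B$ with $|A|,|B| \ge \frac{n}{4130m}$, there is at least one edge between $A$ and $B$.
   Context: $G(n,p)$ is the Erdős–Rényi random graph on vertex set of size $n$ in which each pair of vertices is an edge independently with probability $p$; $\log$ is the natural logarithm. *)

theory Defs
  imports Complex_Main
begin

definition all_edges :: "nat \<Rightarrow> nat set set" where
  "all_edges n = {e. \<exists>i j. i < j \<and> j < n \<and> e = {i, j}}"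

text \<open>Probability that G(n,p) (each potential edge present independently with
  probability p) has a property Q of its edge set E.\<close>
definition gnp_prob :: "nat \<Rightarrow> real \<Rightarrow> (nat set set \<Rightarrow> bool) \<Rightarrow> real" where
  "gnp_prob n p Q = (\<Sum>E\<in>Pow (all_edges n).
      if Q E then p ^ card E * (1 - p) ^ (card (all_edges n) - card E) else 0)"

definition m_param :: "nat \<Rightarrow> real \<Rightarrow> real" where
  "m_param n d = (ln (real n) * ln (ln (ln (real n)))) / (ln d * ln (ln (real n)))"

definition P2 :: "nat \<Rightarrow> real \<Rightarrow> nat set set \<Rightarrow> bool" where
  "P2 n m E = (\<forall>A B. A \<subseteq> {..<n} \<longrightarrow> B \<subseteq> {..<n} \<longrightarrow> A \<inter> B = {} \<longrightarrow>
      real (card A) \<ge> real n / (4130 * m) \<longrightarrow> real (card B) \<ge> real n / (4130 * m) \<longrightarrow>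
      (\<exists>a\<in>A. \<exists>b\<in>B. {a, b} \<in> E))"

end

theory Submission
  imports Defs "HOL-Real_Asymp.Real_Asymp"
begin

lemma finite_all_edges: "finite (all_edges n)"
proof -
  have "all_edges n \<subseteq> Pow {..<n}" unfolding all_edges_def by auto
  thus ?thesis by (rule finite_subset) simp
qed

lemma gnp_avoid:
  assumes S: "S \<subseteq> all_edges n"
  shows "gnp_prob n p (\<lambda>E. E \<inter> S = {}) = (1 - p) ^ card S"
proof -
  let ?U = "all_edges n"
  have fU: "finite ?U" by (rule finite_all_edges)
  have "(\<Prod>x\<in>?U. (if x \<in> S then 0 else p) + (1 - p)) =
        (\<Sum>X\<in>Pow ?U. (\<Prod>x\<in>X. (if x \<in> S then 0 else p)) * (\<Prod>x\<in>?U-X. 1 - p))"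
    by (rule prod_add[OF fU])
  also have "\<dots> = gnp_prob n p (\<lambda>E. E \<inter> S = {})"
    unfolding gnp_prob_def
  proof (rule sum.cong[OF refl])
    fix X assume X: "X \<in> Pow ?U"
    hence fX: "finite X" using fU finite_subset by auto
    have c: "card (?U - X) = card ?U - card X" using X fX by (simp add: card_Diff_subset)
    show "(\<Prod>x\<in>X. (if x \<in> S then 0 else p)) * (\<Prod>x\<in>?U-X. 1 - p) =
       (if X \<inter> S = {} then p ^ card X * (1 - p) ^ (card ?U - card X) else 0)"
    proof (cases "X \<inter> S = {}")
      case True
      hence "(\<Prod>x\<in>X. (if x \<in> S then 0 else p)) = (\<Prod>x\<in>X. p)"
        by (intro prod.cong) auto
      thus ?thesis using True c by simp
    next
      case False
      then obtain x where "x \<in> X" "x \<in> S" by auto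
      hence "(\<Prod>x\<in>X. (if x \<in> S then 0 else p)) = 0"
        using fX by (intro prod_zero) auto
      thus ?thesis using False by simp
    qed
  qed
  finally have "gnp_prob n p (\<lambda>E. E \<inter> S = {}) = (\<Prod>x\<in>?U. (if x \<in> S then 0 else p) + (1 - p))" ..
  also have "\<dots> = (\<Prod>x\<in>?U. if x \<in> S then 1 - p else 1)"
    by (intro prod.cong) auto
  also have "\<dots> = (\<Prod>x\<in>S. 1 - p)"
    using prod.If_cases[OF fU, of "\<lambda>x. x \<in> S" "\<lambda>_. 1 - p" "\<lambda>_. 1"] S
    by (simp add: Int_absorb1)
  finally show ?thesis by simp
qed

lemma gnp_union:
  assumes "finite I" "0 \<le> p" "p \<le> 1"
    and "\<And>E. Q E \<Longrightarrow> \<exists>i\<in>I. R i E"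
  shows "gnp_prob n p Q \<le> (\<Sum>i\<in>I. gnp_prob n p (R i))"
proof -
  let ?w = "\<lambda>E. p ^ card E * (1 - p) ^ (card (all_edges n) - card E)"
  have w0: "0 \<le> ?w E" for E using assms(2,3) by simp
  have "gnp_prob n p Q \<le> (\<Sum>E\<in>Pow (all_edges n). \<Sum>i\<in>I. if R i E then ?w E else 0)"
    unfolding gnp_prob_def
  proof (rule sum_mono)
    fix E
    show "(if Q E then ?w E else 0) \<le> (\<Sum>i\<in>I. if R i E then ?w E else 0)"
    proof (cases "Q E")
      case True
      then obtain i where i: "i \<in> I" "R i E" using assms(4) by blast
      have "(if R i E then ?w E else 0) \<le> (\<Sum>i\<in>I. if R i E then ?w E else 0)"
        by (rule member_le_sum[OF i(1)]) (use w0 assms(1) in auto)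
      thus ?thesis using True i by simp
    next
      case False thus ?thesis using w0 by (auto intro!: sum_nonneg)
    qed
  qed
  also have "\<dots> = (\<Sum>i\<in>I. gnp_prob n p (R i))"
    unfolding gnp_prob_def by (rule sum.swap)
  finally show ?thesis .
qed


lemma pair_edges:
  assumes "A \<subseteq> {..<n}" "B \<subseteq> {..<n}" "A \<inter> B = {}"
  shows "(\<lambda>(a,b). {a,b::nat}) ` (A \<times> B) \<subseteq> all_edges n"
    and "card ((\<lambda>(a,b). {a,b::nat}) ` (A \<times> B)) = card A * card B"
proof -
  show "(\<lambda>(a,b). {a,b::nat}) ` (A \<times> B) \<subseteq> all_edges n"
  proof
    fix e assume "e \<in> (\<lambda>(a,b). {a,b::nat}) ` (A \<times> B)"
    then obtain a b where ab: "a \<in> A" "b \<in> B" "e = {a,b}" by auto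
    hence ne: "a \<noteq> b" "a < n" "b < n" using assms by auto
    show "e \<in> all_edges n"
    proof (cases "a < b")
      case True thus ?thesis using ab ne unfolding all_edges_def by auto
    next
      case False hence "b < a" using ne by simp
      thus ?thesis using ab ne unfolding all_edges_def by (auto simp: insert_commute)
    qed
  qed
  have "inj_on (\<lambda>(a,b). {a,b::nat}) (A \<times> B)"
    unfolding inj_on_def using assms(3) by (auto simp: doubleton_eq_iff)
  thus "card ((\<lambda>(a,b). {a,b::nat}) ` (A \<times> B)) = card A * card B"
    by (simp add: card_image card_cartesian_product)
qed

lemma not_P2_bound:
  assumes p: "0 \<le> p" "p \<le> 1" and hK: "\<And>c::nat. real c \<ge> real n / (4130*m) \<Longrightarrow> K \<le> c"
  shows "gnp_prob n p (\<lambda>E. \<not> P2 n m E) \<le> real (n choose K)^2 * (1-p)^(K*K)"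
proof -
  define C where "C = {A. A \<subseteq> {..<n} \<and> card A = K}"
  define I where "I = {(A,B). A \<in> C \<and> B \<in> C \<and> A \<inter> B = {}}"
  define S where "S = (\<lambda>(A,B). (\<lambda>(a,b). {a,b::nat}) ` (A \<times> B))"
  have fC: "finite C" unfolding C_def by (rule finite_subset[of _ "Pow {..<n}"]) auto
  have cC: "card C = n choose K" unfolding C_def using n_subsets[of "{..<n}" K] by simp
  have IC: "I \<subseteq> C \<times> C" unfolding I_def by auto
  have fI: "finite I" using IC fC finite_subset by blast
  have cI: "card I \<le> (n choose K)^2"
    using card_mono[OF _ IC] fC cC by (simp add: card_cartesian_product power2_eq_square)
  have "gnp_prob n p (\<lambda>E. \<not> P2 n m E) \<le> (\<Sum>i\<in>I. gnp_prob n p (\<lambda>E. E \<inter> S i = {}))"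
  proof (rule gnp_union[OF fI p])
    fix E assume "\<not> P2 n m E"
    then obtain A B where AB: "A \<subseteq> {..<n}" "B \<subseteq> {..<n}" "A \<inter> B = {}"
      "real (card A) \<ge> real n / (4130 * m)" "real (card B) \<ge> real n / (4130 * m)"
      "\<forall>a\<in>A. \<forall>b\<in>B. {a, b} \<notin> E"
      unfolding P2_def by blast
    obtain A' where A': "A' \<subseteq> A" "card A' = K" using obtain_subset_with_card_n hK[OF AB(4)] by metis
    obtain B' where B': "B' \<subseteq> B" "card B' = K" using obtain_subset_with_card_n hK[OF AB(5)] by metis
    have "(A',B') \<in> I" unfolding I_def C_def using A' B' AB by auto
    moreover have "E \<inter> S (A',B') = {}" unfolding S_def using A' B' AB(6) by auto
    ultimately show "\<exists>i\<in>I. E \<inter> S i = {}" by blast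
  qed
  also have "\<dots> = (\<Sum>i\<in>I. (1-p)^(K*K))"
  proof (rule sum.cong[OF refl])
    fix i assume "i \<in> I"
    then obtain A B where i: "i = (A,B)" "A \<subseteq> {..<n}" "B \<subseteq> {..<n}" "A \<inter> B = {}" "card A = K" "card B = K"
      unfolding I_def C_def by auto
    show "gnp_prob n p (\<lambda>E. E \<inter> S i = {}) = (1-p)^(K*K)"
      using gnp_avoid[OF pair_edges(1)[OF i(2-4)]] pair_edges(2)[OF i(2-4)] i(1,5,6)
      unfolding S_def by simp
  qed
  also have "\<dots> = real (card I) * (1-p)^(K*K)" by simp
  also have "\<dots> \<le> real (n choose K)^2 * (1-p)^(K*K)"
    using cI p by (intro mult_right_mono) (simp_all add: of_nat_power[symmetric] del: of_nat_power)
  finally show ?thesis .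
qed


lemma pow_le_exp_fact: "real K ^ K / fact K \<le> exp (real K)"
proof -
  have s: "summable (\<lambda>n. real K ^ n /\<^sub>R fact n)" using exp_converges sums_summable by blast
  have "sum (\<lambda>n. real K ^ n /\<^sub>R fact n) {K} \<le> (\<Sum>n. real K ^ n /\<^sub>R fact n)"
    by (rule sum_le_suminf[OF s]) auto
  also have "\<dots> = exp (real K)" using exp_converges sums_unique by metis
  finally show ?thesis by (simp add: divide_inverse mult.commute)
qed

lemma binom_bound:
  assumes "0 < K"
  shows "real (n choose K) \<le> (exp 1 * real n / real K) ^ K"
proof -
  have a: "real (n choose K) * fact K \<le> real n ^ K"
    using binomial_fact_pow[of n K] by (metis of_nat_fact of_nat_le_iff of_nat_mult of_nat_power)
  have fpos: "(0::real) < fact K" by simp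
  have Kpos: "(0::real) < real K ^ K" using assms by simp
  have b: "real K ^ K \<le> exp (real K) * fact K" using pow_le_exp_fact[of K] fpos
    by (simp add: divide_le_eq)
  have "real (n choose K) \<le> real n ^ K / fact K" using a fpos by (simp add: le_divide_eq)
  also have "\<dots> \<le> real n ^ K * exp (real K) / real K ^ K"
  proof -
    have b': "1 / fact K \<le> exp (real K) / real K ^ K" using b fpos Kpos by (simp add: divide_simps)
    have "real n ^ K / fact K = real n ^ K * (1 / fact K)" by simp
    also have "\<dots> \<le> real n ^ K * (exp (real K) / real K ^ K)" by (rule mult_left_mono[OF b']) simp
    finally show ?thesis by simp
  qed
  also have "\<dots> = (exp 1 * real n / real K) ^ K"
    by (simp add: power_divide power_mult_distrib exp_of_nat_mult[symmetric] mult.commute)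
  finally show ?thesis .
qed

lemma key_ineq:
  fixes n K :: nat and m p :: real
  assumes m1: "1 \<le> m" and Kx: "real K \<ge> real n / (4130 * m)"
    and pl: "p \<ge> 16520 * (m * ln (exp 1 * 4130 * m)) / real n" and p1: "p \<le> 1"
    and big: "4 * 4130^2 * m^2 < real n"
  shows "real (n choose K)^2 * (1-p)^(K*K) < exp (- 2 * real n * p)"
proof -
  define x where "x = real n / (4130 * m)"
  define L where "L = ln (exp 1 * 4130 * m)"
  have "0 \<le> 4 * 4130^2 * m^2" by simp
  hence npos: "0 < real n" using big by linarith
  have xpos: "0 < x" unfolding x_def using npos m1 by simp
  have Kpos: "0 < K" using Kx xpos x_def by auto
  have Lpos: "0 < L" unfolding L_def using m1 by (smt (verit) exp_gt_one ln_gt_zero mult_le_cancel_left1 one_less_exp_iff)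
  have px: "p * x \<ge> 4 * L"
  proof -
    have "p * x \<ge> 16520 * (m * L) / real n * x"
      using pl xpos unfolding L_def by (intro mult_right_mono) auto
    also have "16520 * (m * L) / real n * x = 4 * L" unfolding x_def using npos m1 by (simp add: field_simps)
    finally show ?thesis by simp
  qed
  have ppos: "0 < p" using px xpos Lpos by (smt (verit) mult_nonpos_nonneg)
  have pK: "p * real K \<ge> 4 * L" using px Kx ppos unfolding x_def by (smt (verit) mult_left_mono)
  have c1: "real (n choose K)^2 \<le> exp (2 * real K * L)"
  proof -
    have "exp 1 * real n / real K \<le> exp 1 * real n / x"
    proof (rule divide_left_mono)
      show "x \<le> real K" using Kx x_def by simp
      show "0 \<le> exp 1 * real n" by simp
      show "0 < real K * x" using Kpos xpos by simp
    qed
    also have "\<dots> = exp 1 * 4130 * m" unfolding x_def using npos m1 by (simp add: field_simps)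
    finally have e: "exp 1 * real n / real K \<le> exp 1 * 4130 * m" .
    have "real (n choose K) \<le> (exp 1 * 4130 * m) ^ K"
      using binom_bound[OF Kpos, of n] e by (smt (verit) power_mono divide_nonneg_nonneg exp_gt_zero of_nat_0_le_iff mult_nonneg_nonneg)
    also have "\<dots> = exp (real K * L)" unfolding L_def using m1
      by (subst exp_of_nat_mult) simp
    finally have "real (n choose K) \<le> exp (real K * L)" .
    hence "real (n choose K)^2 \<le> exp (real K * L)^2" by (intro power_mono) auto
    also have "\<dots> = exp (2 * real K * L)" by (simp add: exp_double[symmetric] power2_eq_square exp_add[symmetric])
    finally show ?thesis .
  qed
  have c2: "(1-p)^(K*K) \<le> exp (- p * (real K)^2)"
  proof -
    have "(1-p)^(K*K) \<le> exp (-p)^(K*K)"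
      using p1 by (intro power_mono) (auto simp: exp_ge_add_one_self[of "-p", simplified])
    also have "\<dots> = exp (- p * (real K)^2)"
      by (subst exp_of_nat_mult[symmetric]) (simp add: power2_eq_square mult.commute)
    finally show ?thesis .
  qed
  have "real (n choose K)^2 * (1-p)^(K*K) \<le> exp (2 * real K * L) * exp (- p * (real K)^2)"
    using c1 c2 p1 by (intro mult_mono) auto
  also have "\<dots> = exp (2 * real K * L - p * (real K)^2)" by (simp add: exp_add[symmetric])
  also have "\<dots> < exp (- 2 * real n * p)"
  proof -
    have K2: "(real K)^2 > 4 * real n"
    proof -
      have "x^2 \<le> (real K)^2" using Kx xpos x_def by (intro power_mono) auto
      moreover have "x^2 > 4 * real n"
      proof -
        have "x^2 = real n * real n / (4130 * m)^2" unfolding x_def by (simp add: power2_eq_square)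
        moreover have "real n * real n > 4 * real n * (4130*m)^2"
          using big npos by (simp add: power_mult_distrib)
        ultimately show ?thesis using m1 by (simp add: less_divide_eq)
      qed
      ultimately show ?thesis by simp
    qed
    have "2 * real K * L \<le> p * (real K)^2 / 2"
      using pK Kpos by (simp add: power2_eq_square)
    moreover have "p * (real K)^2 / 2 > 2 * real n * p" using K2 ppos by simp
    ultimately show ?thesis by simp
  qed
  finally show ?thesis .
qed

lemma F1: "eventually (\<lambda>n::nat. ln(ln(ln (real n))) > 0) sequentially" by real_asymp
lemma F2: "eventually (\<lambda>n::nat. ln(real n) powr (1/3) * ln(ln (real n)) \<le> ln (real n) * ln(ln(ln (real n)))) sequentially" by real_asymp
lemma F3: "eventually (\<lambda>n::nat. 4*4130^2*(ln (real n))^2 < real n) sequentially" by real_asymp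
lemma F0: "eventually (\<lambda>n::nat. ln (real n) > 0) sequentially" by real_asymp
lemma F4: "eventually (\<lambda>n::nat. ln (ln (real n)) > 0) sequentially" by real_asymp

lemma m_bounds:
  fixes n :: nat and dd :: real
  assumes d: "12 \<le> dd" "dd \<le> exp (root 3 (ln (real n)))"
    and f0: "ln (real n) > 0" and f4: "ln (ln (real n)) > 0" and f1: "ln(ln(ln (real n))) > 0"
    and f2: "ln(real n) powr (1/3) * ln(ln (real n)) \<le> ln (real n) * ln(ln(ln (real n)))"
  shows "1 \<le> m_param n dd" "m_param n dd \<le> ln (real n)"
proof -
  define l where "l = ln (real n)"
  define ll where "ll = ln l"
  define lll where "lll = ln ll"
  have llpos: "0 < ll" using f4 unfolding ll_def l_def .
  have lll_le: "lll \<le> ll" unfolding lll_def using llpos ln_le_minus_one[of ll] by linarith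
  have lnd1: "1 \<le> ln dd"
  proof -
    have "exp 1 \<le> dd" using d exp_le by linarith
    hence "ln (exp 1) \<le> ln dd" using d by (subst ln_le_cancel_iff) auto
    thus ?thesis by simp
  qed
  have lnd_up: "ln dd \<le> l powr (1/3)"
  proof -
    have "ln dd \<le> ln (exp (root 3 l))" using d lnd1 unfolding l_def
      by (subst ln_le_cancel_iff) auto
    also have "\<dots> = root 3 l" by simp
    also have "\<dots> = l powr (1/3)" using f0 unfolding l_def by (simp add: root_powr_inverse)
    finally show ?thesis .
  qed
  have mdef: "m_param n dd = (l * lll) / (ln dd * ll)" unfolding m_param_def l_def ll_def lll_def by simp
  have den: "0 < ln dd * ll" using lnd1 llpos by simp
  have "ln dd * ll \<le> l powr (1/3) * ll" using lnd_up llpos by (simp add: mult_right_mono)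
  also have "\<dots> \<le> l * lll" using f2 unfolding l_def ll_def lll_def by simp
  finally show "1 \<le> m_param n dd" unfolding mdef using den by simp
  have "l * lll \<le> l * (ln dd * ll)"
  proof (rule mult_left_mono)
    have "1 * ll \<le> ln dd * ll" using lnd1 llpos by (intro mult_right_mono) auto
    thus "lll \<le> ln dd * ll" using lll_le by simp
    show "0 \<le> l" using f0 l_def by simp
  qed
  thus "m_param n dd \<le> ln (real n)" unfolding mdef using den l_def by (simp add: divide_le_eq)
qed

theorem lemma16:
  fixes d p :: "nat \<Rightarrow> real"
  assumes d_range: "\<forall>\<^sub>F n in sequentially. 12 \<le> d n \<and> d n \<le> exp (root 3 (ln (real n)))"
    and p_prob: "\<forall>\<^sub>F n in sequentially. 0 \<le> p n \<and> p n \<le> 1"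
    and p_lower: "\<forall>\<^sub>F n in sequentially.
       p n \<ge> 16520 * (m_param n (d n) * ln (exp 1 * 4130 * m_param n (d n))) / real n"
  shows "\<forall>\<^sub>F n in sequentially.
           gnp_prob n (p n) (\<lambda>E. \<not> P2 n (m_param n (d n)) E) < exp (- 2 * real n * p n)"
  using d_range p_prob p_lower F0 F4 F1 F2 F3
proof eventually_elim
  case (elim n)
  define m where "m = m_param n (d n)"
  have m1: "1 \<le> m" and mu: "m \<le> ln (real n)"
    using m_bounds[of "d n" n] elim unfolding m_def by auto
  have big: "4 * 4130^2 * m^2 < real n"
  proof -
    have "m^2 \<le> (ln (real n))^2" using m1 mu by (intro power_mono) auto
    thus ?thesis using elim(8) by simp
  qed
  define K where "K = nat \<lceil>real n / (4130 * m)\<rceil>"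
  have Kx: "real K \<ge> real n / (4130 * m)" unfolding K_def by linarith
  have hK: "K \<le> c" if "real c \<ge> real n / (4130*m)" for c :: nat
    unfolding K_def using that by (simp add: nat_le_iff ceiling_le)
  have "gnp_prob n (p n) (\<lambda>E. \<not> P2 n m E) \<le> real (n choose K)^2 * (1 - p n)^(K*K)"
    using not_P2_bound[of "p n" n m K] elim hK by auto
  also have "\<dots> < exp (- 2 * real n * p n)"
    using key_ineq[OF m1 Kx _ _ big] elim unfolding m_def by auto
  finally show ?case unfolding m_def .
qed
end
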